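(* Let $(G_n)$ be a sequence of graphs with $\min_{v\in V}\delta_v=\omega(\log n)$, let $k\ge3$ be odd and $p_k^\star<p\le1$, and run the $(k,p,\mathcal B)$-Edge-Majority dynamics from the configuration in which every node is $\mathcal R$. Then there exists a constant $T=T(p,k)$ such that $\Pr(\tau\le T)=1-o(1)$.
   Context: $G_n=(V,E)$, $V=\{1,\dots,n\}$, $N(u)$ neighbourhood, $\delta_u=|N(u)|$, $\mathrm{vol}(S)=\sum_{v\in S}\delta_v$; asymptotics as $n\to\infty$. States in $\{\mathcal R,\mathcal B\}$; $B^{(t)}$ is the set of $\mathcal B$ nodes at round $t$, and $\tau=\inf\{t\ge0:\mathrm{vol}(B^{(t)})/\mathrm{vol}(V)>1/2\}$. $(k,p,\mathcal B)$-Edge-Majority: in each round $t\ge1$ every node $u$ independently samples $k$ neighbours uniformly with replacement; for each sampled $v$, independently, $u$ sees $v$ as $\mathcal B$ with probability $p$ and otherwise sees $v$'s true state at round $t-1$; $u$ adopts the state seen more often. $F_{p,k}(x)=\Pr[\mathrm{Bin}(k,(1-p)x)\ge(k+1)/2]$. $p_k^\star\in[1/9,1/2)$ is the (unique) value such that for $0\le p<p_k^\star$, $F_{p,k}(x)=x$ on $[0,1]$ has exactly three solutions, for $p=p_k^\star$ exactly two, and for $p>p_k^\star$ only $0$. *)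

theory Defs
  imports "HOL-Probability.Probability" "HOL-Library.Landau_Symbols"
begin

text \<open>A graph on V = {1..n} is given by an adjacency predicate G (only pairs in V matter).\<close>

definition nbrs :: "(nat \<Rightarrow> nat \<Rightarrow> bool) \<Rightarrow> nat \<Rightarrow> nat \<Rightarrow> nat set" where
  "nbrs G n u = {v \<in> {1..n}. G u v}"

definition deg :: "(nat \<Rightarrow> nat \<Rightarrow> bool) \<Rightarrow> nat \<Rightarrow> nat \<Rightarrow> nat" where
  "deg G n u = card (nbrs G n u)"

definition vol :: "(nat \<Rightarrow> nat \<Rightarrow> bool) \<Rightarrow> nat \<Rightarrow> nat set \<Rightarrow> real" where
  "vol G n S = (\<Sum>v\<in>S. real (deg G n v))"

definition simple_graph :: "nat \<Rightarrow> (nat \<Rightarrow> nat \<Rightarrow> bool) \<Rightarrow> bool" where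
  "simple_graph n G \<longleftrightarrow> (\<forall>u\<in>{1..n}. \<forall>v\<in>{1..n}. G u v = G v u) \<and> (\<forall>u\<in>{1..n}. \<not> G u u)"

fun rep_pmf :: "nat \<Rightarrow> 'a pmf \<Rightarrow> 'a list pmf" where
  "rep_pmf 0 P = return_pmf []"
| "rep_pmf (Suc k) P = bind_pmf P (\<lambda>x. map_pmf (\<lambda>xs. x # xs) (rep_pmf k P))"

text \<open>States: the set B of blue nodes. True = seen as blue.
  A sampled neighbour v is seen as B with probability p, otherwise its true state.\<close>
definition seen_blue :: "real \<Rightarrow> nat set \<Rightarrow> nat \<Rightarrow> bool pmf" where
  "seen_blue p B v = map_pmf (\<lambda>c. c \<or> v \<in> B) (bernoulli_pmf p)"

definition sample_view :: "(nat \<Rightarrow> nat \<Rightarrow> bool) \<Rightarrow> nat \<Rightarrow> real \<Rightarrow> nat set \<Rightarrow> nat \<Rightarrow> bool pmf" where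
  "sample_view G n p B u = bind_pmf (pmf_of_set (nbrs G n u)) (seen_blue p B)"

definition node_update :: "nat \<Rightarrow> real \<Rightarrow> (nat \<Rightarrow> nat \<Rightarrow> bool) \<Rightarrow> nat \<Rightarrow> nat set \<Rightarrow> nat \<Rightarrow> bool pmf" where
  "node_update k p G n B u =
     map_pmf (\<lambda>obs. length (filter (\<lambda>b. \<not> b) obs) < length (filter id obs))
             (rep_pmf k (sample_view G n p B u))"

definition round_step :: "nat \<Rightarrow> real \<Rightarrow> (nat \<Rightarrow> nat \<Rightarrow> bool) \<Rightarrow> nat \<Rightarrow> nat set \<Rightarrow> nat set pmf" where
  "round_step k p G n B =
     map_pmf (\<lambda>f. {u \<in> {1..n}. f u}) (Pi_pmf {1..n} False (node_update k p G n B))"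

fun trajectory :: "nat \<Rightarrow> real \<Rightarrow> (nat \<Rightarrow> nat \<Rightarrow> bool) \<Rightarrow> nat \<Rightarrow> nat set \<Rightarrow> nat \<Rightarrow> nat set list pmf" where
  "trajectory k p G n B0 0 = return_pmf [B0]"
| "trajectory k p G n B0 (Suc t) =
     bind_pmf (trajectory k p G n B0 t)
       (\<lambda>xs. map_pmf (\<lambda>B'. xs @ [B']) (round_step k p G n (last xs)))"

text \<open>Pr(tau \<le> T) starting from the all-R configuration (B^(0) = {}).\<close>
definition prob_tau_le :: "nat \<Rightarrow> real \<Rightarrow> (nat \<Rightarrow> nat \<Rightarrow> bool) \<Rightarrow> nat \<Rightarrow> nat \<Rightarrow> real" where
  "prob_tau_le k p G n T =
     measure_pmf.prob (trajectory k p G n {} T)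
       {xs. \<exists>B\<in>set xs. vol G n B / vol G n {1..n} > 1/2}"

definition F :: "real \<Rightarrow> nat \<Rightarrow> real \<Rightarrow> real" where
  "F p k x = measure_pmf.prob (binomial_pmf k ((1 - p) * x)) {j. real j \<ge> (real k + 1) / 2}"

definition fixpoints :: "real \<Rightarrow> nat \<Rightarrow> real set" where
  "fixpoints p k = {x \<in> {0..1}. F p k x = x}"

definition pstar :: "nat \<Rightarrow> real" where
  "pstar k = (THE q. q \<in> {1/9..<1/2}
      \<and> (\<forall>p. 0 \<le> p \<and> p < q \<longrightarrow> finite (fixpoints p k) \<and> card (fixpoints p k) = 3)
      \<and> finite (fixpoints q k) \<and> card (fixpoints q k) = 2
      \<and> (\<forall>p. q < p \<and> p \<le> 1 \<longrightarrow> fixpoints p k = {0}))"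

end

theory Submission
  imports Defs
begin

definition aa :: "nat \<Rightarrow> nat \<Rightarrow> real \<Rightarrow> real" where
  "aa n i y = real (n choose i) * y^i * (1-y)^(n-i)"

lemma term_deriv:
  assumes "i \<le> n"
  shows "((\<lambda>y. real (Suc n choose Suc i) * y^(Suc i) * (1-y)^(n-i)) has_real_derivative
           real (Suc n) * (aa n i y - aa n (Suc i) y)) (at y)"
proof -
  have e1: "real (Suc i) * real (Suc n choose Suc i) = real (Suc n) * real (n choose i)"
    by (metis Suc_times_binomial of_nat_mult)
  have e2: "real (n - i) * real (Suc n choose Suc i) = real (Suc n) * real (n choose Suc i)"
    using binomial_absorb_comp[of "Suc n" "Suc i"] by (metis diff_Suc_1 diff_Suc_Suc of_nat_mult)
  show ?thesis
  proof (cases "i = n")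
    case True
    have "((\<lambda>y. real (Suc n choose Suc n) * y^(Suc n)) has_real_derivative
           real (Suc n) * (aa n n y - aa n (Suc n) y)) (at y)"
      unfolding aa_def
      apply (auto intro!: derivative_eq_intros)
      by (cases n) (auto simp: algebra_simps binomial_eq_0)
    then show ?thesis using True by simp
  next
    case False
    then have ni: "n - i = Suc (n - Suc i)" using assms by auto
    show ?thesis unfolding aa_def
      apply (rule derivative_eq_intros refl)+
      apply (simp only: ni power_Suc)
      using e1 e2 ni
      apply (simp add: algebra_simps)
      apply (drule arg_cong[where f="\<lambda>z. z * (y^i * (1-y)^(n - Suc i))"])
      by (simp add: algebra_simps)
  qed
qed

lemma tele: "m \<le> n \<Longrightarrow> (\<Sum>i=m..n. f i - f (Suc i)) = f m - f (Suc (n::nat))" for f :: "nat \<Rightarrow> real"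
proof (induction n)
  case 0
  then show ?case by simp
next
  case (Suc n)
  show ?case
  proof (cases "m = Suc n")
    case True
    then show ?thesis by simp
  next
    case False
    then have "m \<le> n" using Suc by auto
    then show ?thesis using Suc by (simp add: sum.cl_ivl_Suc)
  qed
qed

definition hb :: "nat \<Rightarrow> real \<Rightarrow> real" where
  "hb m y = (\<Sum>i=m..2*m. real (Suc (2*m) choose Suc i) * y^(Suc i) * (1-y)^(2*m-i))"

definition hder :: "nat \<Rightarrow> real \<Rightarrow> real" where
  "hder m y = real (Suc (2*m)) * real ((2*m) choose m) * (y*(1-y))^m"

lemma hb_deriv: "(hb m has_real_derivative hder m y) (at y)"
proof -
  have "((\<lambda>y. hb m y) has_real_derivative (\<Sum>i=m..2*m. real (Suc (2*m)) * (aa (2*m) i y - aa (2*m) (Suc i) y))) (at y)"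
    unfolding hb_def by (rule DERIV_sum) (rule term_deriv, simp)
  also have "(\<Sum>i=m..2*m. real (Suc (2*m)) * (aa (2*m) i y - aa (2*m) (Suc i) y))
      = real (Suc (2*m)) * (\<Sum>i=m..2*m. (aa (2*m) i y - aa (2*m) (Suc i) y))"
    by (rule sum_distrib_left[symmetric])
  also have "(\<Sum>i=m..2*m. (aa (2*m) i y - aa (2*m) (Suc i) y)) = aa (2*m) m y - aa (2*m) (Suc (2*m)) y"
    by (rule tele[of m "2*m" "\<lambda>i. aa (2*m) i y"]) simp
  also have "aa (2*m) (Suc (2*m)) y = 0" by (simp add: aa_def)
  also have "aa (2*m) m y = real ((2*m) choose m) * (y*(1-y))^m"
    unfolding aa_def by (simp add: power_mult_distrib mult_2)
  finally show ?thesis by (simp add: hder_def mult.assoc)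
qed

lemma hb_isCont: "isCont (hb m) y"
  using hb_deriv DERIV_isCont by blast

lemma hb_cont: "continuous_on S (hb m)"
  by (simp add: continuous_at_imp_continuous_on hb_isCont)

lemma hb_0: "hb m 0 = 0"
  by (simp add: hb_def)

lemma hb_1: "hb m 1 = 1"
proof -
  have "hb m 1 = (\<Sum>i=m..2*m. if i = 2*m then 1 else 0)"
    unfolding hb_def by (rule sum.cong) auto
  also have "\<dots> = 1" by simp
  finally show ?thesis .
qed

lemma hder_sym: "hder m (1-y) = hder m y"
  unfolding hder_def by (simp add: mult.commute[of "1-y" y])

lemma hb_sym: "hb m y + hb m (1-y) = 1"
proof -
  have "\<forall>x. ((\<lambda>x. hb m x + hb m (1-x)) has_real_derivative 0) (at x)"
  proof
    fix x
    have "((\<lambda>x. hb m x + hb m (1-x)) has_real_derivative hder m x + hder m (1-x) * (0 - 1)) (at x)"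
      by (rule derivative_eq_intros hb_deriv DERIV_chain2[OF hb_deriv] refl)+
    then show "((\<lambda>x. hb m x + hb m (1-x)) has_real_derivative 0) (at x)"
      by (simp add: hder_sym)
  qed
  from DERIV_isconst_all[OF this, of y 0] show ?thesis by (simp add: hb_0 hb_1)
qed

lemma hb_half: "hb m (1/2) = 1/2"
  using hb_sym[of m "1/2"] by simp

lemma hder_nonneg: "0 \<le> y \<Longrightarrow> y \<le> 1 \<Longrightarrow> 0 \<le> hder m y"
  by (simp add: hder_def)

lemma hb_mono: "0 \<le> a \<Longrightarrow> a \<le> b \<Longrightarrow> b \<le> 1 \<Longrightarrow> hb m a \<le> hb m b"
  by (rule DERIV_nonneg_imp_nondecreasing[of a b]) (auto intro!: hb_deriv hder_nonneg)

lemma hb_nonneg: "0 \<le> y \<Longrightarrow> y \<le> 1 \<Longrightarrow> 0 \<le> hb m y"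
  using hb_mono[of 0 y m] by (simp add: hb_0)

lemma hb_le1: "0 \<le> y \<Longrightarrow> y \<le> 1 \<Longrightarrow> hb m y \<le> 1"
  using hb_mono[of y 1 m] by (simp add: hb_1)

definition uf :: "nat \<Rightarrow> real \<Rightarrow> real" where
  "uf m y = y * hder m y - hb m y"

lemma hder_pos_const: "0 < real (Suc (2*m)) * real ((2*m) choose m)"
  by simp

lemma hder_strict_up:
  assumes "m \<ge> 1" "0 \<le> a" "a < b" "b \<le> 1/2"
  shows "hder m a < hder m b"
proof -
  have "a*(1-a) < b*(1-b)"
  proof -
    have "b*(1-b) - a*(1-a) = (b-a)*(1-a-b)" by (simp add: algebra_simps)
    moreover have "(b-a)*(1-a-b) > 0" using assms by (intro mult_pos_pos) auto
    ultimately show ?thesis by linarith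
  qed
  moreover have "0 \<le> a*(1-a)" using assms by auto
  ultimately have "(a*(1-a))^m < (b*(1-b))^m"
    using assms by (intro power_strict_mono) auto
  then show ?thesis unfolding hder_def
    using hder_pos_const[of m] by (simp add: mult.assoc)
qed

lemma hder_strict_down:
  assumes "m \<ge> 1" "1/2 \<le> a" "a < b" "b \<le> 1"
  shows "hder m b < hder m a"
proof -
  have "b*(1-b) < a*(1-a)"
  proof -
    have "a*(1-a) - b*(1-b) = (b-a)*(a+b-1)" by (simp add: algebra_simps)
    moreover have "(b-a)*(a+b-1) > 0" using assms by (intro mult_pos_pos) auto
    ultimately show ?thesis by linarith
  qed
  moreover have "0 \<le> b*(1-b)" using assms by auto
  ultimately have "(b*(1-b))^m < (a*(1-a))^m"
    using assms by (intro power_strict_mono) auto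
  then show ?thesis unfolding hder_def
    using hder_pos_const[of m] by (simp add: mult.assoc)
qed

lemma hb_mvt:
  assumes "a < b"
  shows "\<exists>z. a < z \<and> z < b \<and> hb m b - hb m a = (b - a) * hder m z"
  using MVT2[of a b "hb m" "hder m"] assms hb_deriv by auto

lemma uf_up:
  assumes "m \<ge> 1" "0 \<le> a" "a < b" "b \<le> 1/2"
  shows "uf m a < uf m b"
proof -
  obtain z where z: "a < z" "z < b" "hb m b - hb m a = (b - a) * hder m z"
    using hb_mvt[OF assms(3)] by blast
  have "hder m z < hder m b" using hder_strict_up[of m z b] assms z by auto
  then have "(b - a) * hder m z < (b - a) * hder m b" using assms by auto
  moreover have "a * hder m a \<le> a * hder m b"
    using hder_strict_up[of m a b] assms by (intro mult_left_mono) auto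
  ultimately show ?thesis unfolding uf_def using z(3) by (simp add: algebra_simps)
qed

lemma uf_down:
  assumes "m \<ge> 1" "1/2 \<le> a" "a < b" "b \<le> 1"
  shows "uf m b < uf m a"
proof -
  obtain z where z: "a < z" "z < b" "hb m b - hb m a = (b - a) * hder m z"
    using hb_mvt[OF assms(3)] by blast
  have "hder m b < hder m z" using hder_strict_down[of m z b] assms z by auto
  then have "(b - a) * hder m b < (b - a) * hder m z" using assms by auto
  moreover have "a * hder m b \<le> a * hder m a"
    using hder_strict_down[of m a b] assms by (intro mult_left_mono) auto
  ultimately show ?thesis unfolding uf_def using z(3) by (simp add: algebra_simps)
qed

lemma uf_0: "uf m 0 = 0" by (simp add: uf_def hb_0)
lemma uf_1: "m \<ge> 1 \<Longrightarrow> uf m 1 = -1" by (simp add: uf_def hb_1 hder_def)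

lemma uf_cont: "continuous_on S (uf m)"
  unfolding uf_def hder_def by (intro continuous_intros hb_cont)

definition g :: "nat \<Rightarrow> real \<Rightarrow> real" where
  "g m y = hb m y / y"

lemma g_deriv: "y \<noteq> 0 \<Longrightarrow> (g m has_real_derivative uf m y / y^2) (at y)"
  unfolding g_def uf_def
  by (rule derivative_eq_intros hb_deriv refl | simp)+ (simp add: algebra_simps power2_eq_square)

lemma g_cont: "0 \<notin> S \<Longrightarrow> continuous_on S (g m)"
  unfolding g_def by (intro continuous_intros hb_cont) auto

lemma unimodal:
  assumes m: "m \<ge> 1"
  shows "\<exists>ys. 1/2 < ys \<and> ys < 1 \<and>
     (\<forall>a b. 0 < a \<longrightarrow> a < b \<longrightarrow> b \<le> ys \<longrightarrow> g m a < g m b) \<and>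
     (\<forall>a b. ys \<le> a \<longrightarrow> a < b \<longrightarrow> b \<le> 1 \<longrightarrow> g m b < g m a)"
proof -
  have u12: "uf m (1/2) > 0" using uf_up[OF m, of 0 "1/2"] by (simp add: uf_0)
  obtain ys where ys: "1/2 \<le> ys" "ys \<le> 1" "uf m ys = 0"
    using IVT2'[of "uf m" 1 0 "1/2"] uf_1[OF m] u12 uf_cont by force
  have ys1: "1/2 < ys" using ys u12 by (cases "ys = 1/2") auto
  have ys2: "ys < 1" using ys uf_1[OF m] by (cases "ys = 1") auto
  have pos: "uf m y > 0" if "0 < y" "y < ys" for y
  proof (cases "y \<le> 1/2")
    case True then show ?thesis using uf_up[OF m, of 0 y] that by (simp add: uf_0)
  next
    case False then show ?thesis using uf_down[OF m, of y ys] that ys by auto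
  qed
  have neg: "uf m y < 0" if "ys < y" "y \<le> 1" for y
    using uf_down[OF m, of ys y] that ys ys1 by auto
  show ?thesis
  proof (intro exI conjI allI impI)
    fix a b :: real assume ab: "0 < a" "a < b" "b \<le> ys"
    show "g m a < g m b"
    proof (rule DERIV_pos_imp_increasing_open[OF ab(2)])
      fix x assume "a < x" "x < b"
      then show "\<exists>y. (g m has_real_derivative y) (at x) \<and> 0 < y"
        using ab pos[of x] by (intro exI[of _ "uf m x / x^2"]) (auto intro!: g_deriv)
    next
      show "continuous_on {a..b} (g m)" using ab by (intro g_cont) auto
    qed
  next
    fix a b :: real assume ab: "ys \<le> a" "a < b" "b \<le> 1"
    show "g m b < g m a"
    proof (rule DERIV_neg_imp_decreasing_open[OF ab(2)])
      fix x assume "a < x" "x < b"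
      then show "\<exists>y. (g m has_real_derivative y) (at x) \<and> y < 0"
        using ab neg[of x] ys1 by (intro exI[of _ "uf m x / x^2"]) (auto intro!: g_deriv divide_neg_pos)
    next
      show "continuous_on {a..b} (g m)" using ab ys1 by (intro g_cont) auto
    qed
  qed (use ys1 ys2 in auto)
qed

lemma hb_step: 
  assumes "1/2 \<le> y" "y \<le> 1"
  shows "hb m y \<le> hb (Suc m) y"
proof -
  define D where "D t = hb (Suc m) t - hb m t" for t
  define K where "K = real (Suc (2*m)) * real ((2*m) choose m)"
  define K' where "K' = real (Suc (2*Suc m)) * real ((2*Suc m) choose Suc m)"
  have hdm: "hder m t = K * (t*(1-t))^m" for t unfolding hder_def K_def by simp
  have hdm': "hder (Suc m) t = (t*(1-t))^m * (K' * (t*(1-t)))" for t unfolding hder_def K'_def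
    by (simp add: algebra_simps)
  have Dd: "(D has_real_derivative (t*(1-t))^m * (K' * (t*(1-t)) - K)) (at t)" for t
  proof -
    have "(D has_real_derivative hder (Suc m) t - hder m t) (at t)"
      unfolding D_def[abs_def] by (intro derivative_intros hb_deriv)
    then show ?thesis by (simp add: hdm hdm' algebra_simps)
  qed
  have D12: "D (1/2) = 0" by (simp add: D_def hb_half)
  have D1: "D 1 = 0" by (simp add: D_def hb_1)
  show ?thesis
  proof (cases "K' * (y*(1-y)) \<ge> K")
    case True
    have "D (1/2) \<le> D y"
    proof (rule DERIV_nonneg_imp_nondecreasing[OF assms(1)])
      fix t assume t: "1/2 \<le> t" "t \<le> y"
      have "t*(1-t) - y*(1-y) = (y-t)*(t+y-1)" by (simp add: algebra_simps)
      moreover have "(y-t)*(t+y-1) \<ge> 0" using t assms by (intro mult_nonneg_nonneg) auto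
      ultimately have "t*(1-t) \<ge> y*(1-y)" by linarith
      moreover have "K' \<ge> 0" by (simp add: K'_def)
      ultimately have "K' * (t*(1-t)) \<ge> K" using True by (smt (verit) mult_left_mono)
      moreover have "(t*(1-t))^m \<ge> 0" using t assms by auto
      ultimately show "\<exists>d. (D has_real_derivative d) (at t) \<and> 0 \<le> d"
        using Dd[of t] by (intro exI[of _ "(t*(1-t))^m * (K' * (t*(1-t)) - K)"] conjI) (auto intro!: mult_nonneg_nonneg)
    qed
    then show ?thesis using D12 by (simp add: D_def)
  next
    case False
    have "(\<lambda>t. - D t) y \<le> (\<lambda>t. - D t) 1"
    proof (rule DERIV_nonneg_imp_nondecreasing[OF assms(2)])
      fix t assume t: "y \<le> t" "t \<le> 1"
      have "y*(1-y) - t*(1-t) = (t-y)*(t+y-1)" by (simp add: algebra_simps)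
      moreover have "(t-y)*(t+y-1) \<ge> 0" using t assms by (intro mult_nonneg_nonneg) auto
      ultimately have "t*(1-t) \<le> y*(1-y)" by linarith
      moreover have "K' \<ge> 0" by (simp add: K'_def)
      ultimately have "K' * (t*(1-t)) \<le> K" using False by (smt (verit) mult_left_mono)
      moreover have "(t*(1-t))^m \<ge> 0" using t assms by auto
      ultimately show "\<exists>d. ((\<lambda>t. - D t) has_real_derivative d) (at t) \<and> 0 \<le> d"
        using Dd[of t] by (intro exI[of _ "- ((t*(1-t))^m * (K' * (t*(1-t)) - K))"] conjI)
           (auto intro!: derivative_intros mult_nonneg_nonpos)
    qed
    then show ?thesis using D1 by (simp add: D_def)
  qed
qed

lemma hb_1_34: "hb 1 (3/4) = 27/32"
  by (simp add: hb_def numeral_eq_Suc)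

lemma hb_34: "m \<ge> 1 \<Longrightarrow> hb m (3/4) \<ge> 27/32"
proof (induction m rule: dec_induct)
  case base then show ?case using hb_1_34 by simp
next
  case (step n) then show ?case using hb_step[of "3/4" n] by simp
qed

lemma F_hb:
  assumes k: "k = Suc (2*m)" and q: "0 \<le> (1-p)*x" "(1-p)*x \<le> 1"
  shows "F p k x = hb m ((1-p)*x)"
proof -
  define q where "q = (1-p)*x"
  have q01: "0 \<le> q" "q \<le> 1" using q by (auto simp: q_def)
  have "F p k x = measure_pmf.prob (binomial_pmf k q) {Suc m..Suc (2*m)}"
    unfolding F_def q_def[symmetric]
  proof (rule measure_prob_cong_0)
    fix j assume "j \<in> {j. (real k + 1) / 2 \<le> real j} - {Suc m..Suc (2 * m)}"
    then have "j > k" using k by auto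
    then show "pmf (binomial_pmf k q) j = 0" using q01 by (simp add: pmf_binomial binomial_eq_0)
  next
    fix j assume "j \<in> {Suc m..Suc (2 * m)} - {j. (real k + 1) / 2 \<le> real j}"
    then show "pmf (binomial_pmf k q) j = 0" using k by auto
  qed
  also have "\<dots> = (\<Sum>j\<in>{Suc m..Suc (2*m)}. pmf (binomial_pmf k q) j)"
    by (rule measure_measure_pmf_finite) simp
  also have "\<dots> = (\<Sum>j\<in>{Suc m..Suc (2*m)}. real (Suc (2*m) choose j) * q^j * (1-q)^(Suc (2*m) - j))"
    using q01 k by (simp add: pmf_binomial)
  also have "\<dots> = hb m q"
    unfolding hb_def by (subst sum.shift_bounds_cl_Suc_ivl) simp
  finally show ?thesis by (simp add: q_def)
qed

definition SL :: "nat \<Rightarrow> real \<Rightarrow> real set" where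
  "SL m L = {y. 0 < y \<and> y \<le> 1 \<and> g m y = L}"

lemma fix_eq:
  assumes k: "k = Suc (2*m)" and p: "0 \<le> p" "p < 1"
  shows "fixpoints p k = insert 0 ((\<lambda>y. y / (1-p)) ` SL m (1/(1-p)))"
proof -
  define c where "c = 1 - p"
  have c: "0 < c" "c \<le> 1" using p by (auto simp: c_def)
  have Fx: "F p k x = hb m (c*x)" if "0 \<le> x" "x \<le> 1" for x
    using F_hb[OF k, of p x] that c by (simp add: c_def mult_le_one)
  show ?thesis unfolding c_def[symmetric]
  proof (intro equalityI subsetI)
    fix x assume "x \<in> fixpoints p k"
    then have x: "0 \<le> x" "x \<le> 1" "hb m (c*x) = x" using Fx by (auto simp: fixpoints_def)
    show "x \<in> insert 0 ((\<lambda>y. y / c) ` SL m (1/c))"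
    proof (cases "x = 0")
      case False
      then have "x > 0" using x by auto
      then have "c*x \<in> SL m (1/c)" using x c
        by (auto simp: SL_def g_def mult_le_one)
      moreover have "x = (c*x)/c" using c by simp
      ultimately show ?thesis by blast
    qed simp
  next
    fix x assume "x \<in> insert 0 ((\<lambda>y. y / c) ` SL m (1/c))"
    then consider "x = 0" | y where "y \<in> SL m (1/c)" "x = y/c" by blast
    then show "x \<in> fixpoints p k"
    proof cases
      case 1 then show ?thesis using Fx[of 0] by (simp add: fixpoints_def hb_0)
    next
      case 2
      then have y: "0 < y" "y \<le> 1" "hb m y / y = 1/c" by (auto simp: SL_def g_def)
      then have hy: "hb m y = y / c" by (auto simp: field_simps)
      have "x \<le> 1" using hb_le1[of y m] y hy 2 by simp
      moreover have "0 \<le> x" using 2 y c by simp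
      moreover have "c * x = y" using 2 c by simp
      ultimately show ?thesis using Fx[of x] hy 2 by (simp add: fixpoints_def)
    qed
  qed
qed

lemma card_fix:
  assumes k: "k = Suc (2*m)" and p: "0 \<le> p" "p < 1" and fin: "finite (SL m (1/(1-p)))"
  shows "finite (fixpoints p k) \<and> card (fixpoints p k) = Suc (card (SL m (1/(1-p))))"
proof -
  have inj: "inj_on (\<lambda>y. y / (1-p)) (SL m (1/(1-p)))" using p by (auto simp: inj_on_def)
  have "0 \<notin> (\<lambda>y. y / (1-p)) ` SL m (1/(1-p))" using p by (auto simp: SL_def)
  then show ?thesis using fix_eq[OF assms(1-3)] fin card_image[OF inj] by simp
qed

lemma fix_p1: "k = Suc (2*m) \<Longrightarrow> fixpoints 1 k = {0}"
  using F_hb[of k m 1] by (auto simp: fixpoints_def hb_0)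

lemma pstar_char:
  assumes k: "k = Suc (2*m)" and m: "m \<ge> 1"
  shows "\<exists>M. 1 < M \<and> pstar k = 1 - 1/M \<and> (\<forall>y. 0 \<le> y \<longrightarrow> y \<le> 1 \<longrightarrow> hb m y \<le> M*y)"
proof -
  obtain ys where ys: "1/2 < ys" "ys < 1"
    and up: "\<And>a b. 0 < a \<Longrightarrow> a < b \<Longrightarrow> b \<le> ys \<Longrightarrow> g m a < g m b"
    and down: "\<And>a b. ys \<le> a \<Longrightarrow> a < b \<Longrightarrow> b \<le> 1 \<Longrightarrow> g m b < g m a"
    using unimodal[OF m] by blast
  define M where "M = g m ys"
  have gle: "g m y \<le> M" if "0 < y" "y \<le> 1" for y
    using up[of y ys] down[of ys y] that unfolding M_def by (cases y ys rule: linorder_cases) auto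
  have glt: "g m y < M" if "0 < y" "y \<le> 1" "y \<noteq> ys" for y
    using up[of y ys] down[of ys y] that unfolding M_def by (cases y ys rule: linorder_cases) auto
  have g1: "g m 1 = 1" by (simp add: g_def hb_1)
  have g12: "g m (1/2) = 1" by (simp add: g_def hb_half)
  have g14: "g m (1/4) < 1" using up[of "1/4" "1/2"] ys g12 by simp
  have M1: "M > 1" using glt[of 1] g1 ys by simp
  have M2: "M < 2"
  proof -
    have "hb m ys \<le> 1" using hb_le1[of ys m] ys by simp
    then have "M \<le> 1/ys" using ys by (simp add: M_def g_def divide_right_mono)
    also have "\<dots> < 2" using ys by (simp add: field_simps)
    finally show ?thesis .
  qed
  have M98: "M \<ge> 9/8"
  proof -
    have "g m (3/4) \<ge> 9/8" using hb_34[OF m] by (simp add: g_def)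
    then show ?thesis using gle[of "3/4"] by simp
  qed
  have gcont: "continuous_on {a..b} (g m)" if "0 < a" for a b
    using that by (intro g_cont) auto
  have SM: "SL m M = {ys}"
    using glt ys by (auto simp: SL_def M_def) (metis less_irrefl)
  have Sbig: "SL m L = {}" if "L > M" for L
    using gle that by (force simp: SL_def)
  have Stwo: "\<exists>y1 y2. y1 \<noteq> y2 \<and> SL m L = {y1, y2}" if L: "1 \<le> L" "L < M" for L
  proof -
    obtain y1 where y1: "1/4 \<le> y1" "y1 \<le> ys" "g m y1 = L"
      using IVT'[of "g m" "1/4" L ys] g14 L ys gcont[of "1/4" ys] by (auto simp: M_def)
    obtain y2 where y2: "ys \<le> y2" "y2 \<le> 1" "g m y2 = L"
      using IVT2'[of "g m" 1 L ys] g1 L ys gcont[of ys 1] by (auto simp: M_def)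
    have y1ys: "y1 \<noteq> ys" using y1 L by (auto simp: M_def)
    have y2ys: "y2 \<noteq> ys" using y2 L by (auto simp: M_def)
    have "SL m L = {y1, y2}"
    proof (intro equalityI subsetI)
      fix y assume y: "y \<in> SL m L"
      then have y0: "0 < y" "y \<le> 1" "g m y = L" by (auto simp: SL_def)
      show "y \<in> {y1, y2}"
      proof (cases "y \<le> ys")
        case True
        then have "y = y1" using up[of y y1] up[of y1 y] y0 y1 by (cases y y1 rule: linorder_cases) auto
        then show ?thesis by simp
      next
        case False
        then have "y = y2" using down[of y y2] down[of y2 y] y0 y2 by (cases y y2 rule: linorder_cases) auto
        then show ?thesis by simp
      qed
    next
      fix y assume "y \<in> {y1, y2}"
      then show "y \<in> SL m L" using y1 y2 ys by (auto simp: SL_def)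
    qed
    moreover have "y1 \<noteq> y2" using y1 y2 y1ys by auto
    ultimately show ?thesis by blast
  qed
  define q where "q = 1 - 1/M"
  have Minv: "0 < 1/M" "1/M < 1" using M1 by auto
  have Pq: "q \<in> {1/9..<1/2}
      \<and> (\<forall>p. 0 \<le> p \<and> p < q \<longrightarrow> finite (fixpoints p k) \<and> card (fixpoints p k) = 3)
      \<and> finite (fixpoints q k) \<and> card (fixpoints q k) = 2
      \<and> (\<forall>p. q < p \<and> p \<le> 1 \<longrightarrow> fixpoints p k = {0})"
  proof (intro conjI allI impI)
    show "q \<in> {1/9..<1/2}" using M98 M2 by (auto simp: q_def field_simps)
  next
    fix p assume p: "0 \<le> p \<and> p < q"
    then have p1: "p < 1" using Minv unfolding q_def by linarith
    have L: "1 \<le> 1/(1-p)" "1/(1-p) < M" using p p1 M1 by (auto simp: q_def field_simps)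
    obtain y1 y2 where "y1 \<noteq> y2" "SL m (1/(1-p)) = {y1, y2}" using Stwo[OF L] by blast
    then show "finite (fixpoints p k)" "card (fixpoints p k) = 3"
      using card_fix[OF k, of p] p p1 by auto
  next
    have q: "0 \<le> q" "q < 1" "1/(1-q) = M" using M1 by (auto simp: q_def)
    show "finite (fixpoints q k)" "card (fixpoints q k) = 2"
      using card_fix[OF k q(1,2)] q(3) SM by auto
  next
    fix p assume p: "q < p \<and> p \<le> 1"
    show "fixpoints p k = {0}"
    proof (cases "p = 1")
      case True then show ?thesis using fix_p1[OF k] by simp
    next
      case False
      have p1: "p < 1" "0 \<le> p" using p False apply auto[1] using p Minv unfolding q_def by linarith
      have "1/(1-p) > M" using p p1 M1 by (auto simp: q_def field_simps)
      then show ?thesis using fix_eq[OF k p1(2) p1(1)] Sbig by simp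
    qed
  qed
  have "pstar k = q"
    unfolding pstar_def
  proof (rule the_equality)
    show "q \<in> {1/9..<1/2}
      \<and> (\<forall>p. 0 \<le> p \<and> p < q \<longrightarrow> finite (fixpoints p k) \<and> card (fixpoints p k) = 3)
      \<and> finite (fixpoints q k) \<and> card (fixpoints q k) = 2
      \<and> (\<forall>p. q < p \<and> p \<le> 1 \<longrightarrow> fixpoints p k = {0})" by (rule Pq)
  next
    fix q' assume Pq': "q' \<in> {1/9..<1/2}
      \<and> (\<forall>p. 0 \<le> p \<and> p < q' \<longrightarrow> finite (fixpoints p k) \<and> card (fixpoints p k) = 3)
      \<and> finite (fixpoints q' k) \<and> card (fixpoints q' k) = 2
      \<and> (\<forall>p. q' < p \<and> p \<le> 1 \<longrightarrow> fixpoints p k = {0})"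
    show "q' = q"
    proof (rule ccontr)
      assume "q' \<noteq> q"
      then consider "q' < q" | "q < q'" by linarith
      then show False
      proof cases
        case 1
        then have "card (fixpoints q' k) = 3" using Pq Pq' by auto
        then show False using Pq' by simp
      next
        case 2
        then have "card (fixpoints q k) = 3" using Pq Pq' by auto
        then show False using Pq by simp
      qed
    qed
  qed
  moreover have "\<forall>y. 0 \<le> y \<longrightarrow> y \<le> 1 \<longrightarrow> hb m y \<le> M*y"
  proof (intro allI impI)
    fix y :: real assume y: "0 \<le> y" "y \<le> 1"
    show "hb m y \<le> M*y"
    proof (cases "y = 0")
      case True then show ?thesis by (simp add: hb_0)
    next
      case False
      then have "hb m y / y \<le> M" using gle[of y] y by (simp add: g_def)
      then show ?thesis using False y by (simp add: divide_le_eq mult.commute)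
    qed
  qed
  ultimately show ?thesis using M1 unfolding q_def by blast
qed

lemma pmf_seen_blue_False:
  assumes "0 \<le> p" "p \<le> 1"
  shows "pmf (seen_blue p B v) False = (if v \<in> B then 0 else 1 - p)"
proof -
  have "Collect Not = {False}" by auto
  then show ?thesis using assms unfolding seen_blue_def by (auto simp: pmf_map vimage_def measure_pmf_single)
qed

lemma sample_view_eq:
  assumes p: "0 \<le> p" "p \<le> 1" and ne: "nbrs G n u \<noteq> {}"
  shows "sample_view G n p B u =
     bernoulli_pmf (1 - (1-p) * (real (card (nbrs G n u - B)) / real (card (nbrs G n u))))"
proof -
  have fin: "finite (nbrs G n u)" by (simp add: nbrs_def)
  define r where "r = real (card (nbrs G n u - B)) / real (card (nbrs G n u))"
  have r01: "0 \<le> r" "r \<le> 1" unfolding r_def using fin ne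
    by (auto simp: divide_le_eq_1 card_mono intro!: card_mono)
  have F: "pmf (sample_view G n p B u) False = (1-p) * r"
  proof -
    have "pmf (sample_view G n p B u) False = (\<Sum>v\<in>nbrs G n u. pmf (seen_blue p B v) False) / card (nbrs G n u)"
      unfolding sample_view_def pmf_bind using fin ne by (simp add: integral_pmf_of_set)
    also have "(\<Sum>v\<in>nbrs G n u. pmf (seen_blue p B v) False) = (\<Sum>v\<in>nbrs G n u. if v \<in> B then 0 else 1 - p)"
      using p by (simp add: pmf_seen_blue_False)
    also have "\<dots> = (\<Sum>v\<in>nbrs G n u - B. 1 - p)"
      using fin by (simp add: sum.If_cases Diff_eq)
    also have "\<dots> = (1-p) * card (nbrs G n u - B)" by simp
    finally show ?thesis by (simp add: r_def)
  qed
  show ?thesis unfolding r_def[symmetric]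
  proof (rule pmf_eqI)
    fix b :: bool
    have "0 \<le> 1 - (1-p) * r" "1 - (1-p)*r \<le> 1" using p r01 by (auto simp: mult_le_one)
    then show "pmf (sample_view G n p B u) b = pmf (bernoulli_pmf (1 - (1 - p) * r)) b"
      using F by (cases b) (auto simp: pmf_False_conv_True[of "sample_view G n p B u"])
  qed
qed

lemma rep_len: "xs \<in> set_pmf (rep_pmf k P) \<Longrightarrow> length xs = k"
  by (induction k arbitrary: xs) auto

lemma map_Not_bernoulli: "0 \<le> b \<Longrightarrow> b \<le> 1 \<Longrightarrow> map_pmf Not (bernoulli_pmf b) = bernoulli_pmf (1 - b)"
proof (rule pmf_eqI)
  fix i :: bool assume "0 \<le> b" "b \<le> 1"
  moreover have "{x. (\<not> x) = i} = {\<not> i}" by auto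
  ultimately show "pmf (map_pmf Not (bernoulli_pmf b)) i = pmf (bernoulli_pmf (1 - b)) i"
    by (cases i) (auto simp: pmf_map vimage_def measure_pmf_single)
qed

lemma rep_count:
  assumes "0 \<le> b" "b \<le> 1"
  shows "map_pmf (\<lambda>obs. length (filter Not obs)) (rep_pmf k (bernoulli_pmf b)) = binomial_pmf k (1 - b)"
proof (induction k)
  case 0
  show ?case using assms by (intro pmf_eqI) (auto simp: pmf_binomial indicator_def)
next
  case (Suc k)
  have "map_pmf (\<lambda>obs. length (filter Not obs)) (rep_pmf (Suc k) (bernoulli_pmf b))
     = bind_pmf (bernoulli_pmf b) (\<lambda>x. map_pmf (\<lambda>j. (if x then 0 else 1) + j)
          (map_pmf (\<lambda>obs. length (filter Not obs)) (rep_pmf k (bernoulli_pmf b))))"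
    by (simp add: map_bind_pmf map_pmf_comp) (intro bind_pmf_cong refl map_pmf_cong, auto)
  also have "\<dots> = bind_pmf (bernoulli_pmf b) (\<lambda>x. map_pmf (\<lambda>j. (if x then 0 else 1) + j) (binomial_pmf k (1-b)))"
    by (simp only: Suc)
  also have "\<dots> = bind_pmf (map_pmf Not (bernoulli_pmf b)) (\<lambda>x. map_pmf (\<lambda>j. (if x then 1 else 0) + j) (binomial_pmf k (1-b)))"
    unfolding bind_map_pmf by (intro bind_pmf_cong refl arg_cong2[where f=map_pmf] ext) simp
  also have "\<dots> = binomial_pmf (Suc k) (1 - b)"
    using assms by (subst map_Not_bernoulli) (auto simp: binomial_pmf_Suc map_pmf_def)
  finally show ?case .
qed


definition rf :: "(nat \<Rightarrow> nat \<Rightarrow> bool) \<Rightarrow> nat \<Rightarrow> nat set \<Rightarrow> nat \<Rightarrow> real" where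
  "rf G n B u = real (card (nbrs G n u - B)) / real (card (nbrs G n u))"

lemma rf_01: "0 \<le> rf G n B u \<and> rf G n B u \<le> 1"
proof -
  have "finite (nbrs G n u)" by (simp add: nbrs_def)
  then have "card (nbrs G n u - B) \<le> card (nbrs G n u)" by (intro card_mono) auto
  then show ?thesis unfolding rf_def by (cases "card (nbrs G n u) = 0") auto
qed

lemma node_red:
  assumes k: "k = Suc (2*m)" and p: "0 \<le> p" "p \<le> 1" and ne: "nbrs G n u \<noteq> {}"
  shows "measure_pmf.prob (node_update k p G n B u) {False} = F p k (rf G n B u)"
proof -
  define r where "r = rf G n B u"
  have r01: "0 \<le> r" "r \<le> 1" using rf_01 by (auto simp: r_def)
  define \<beta> where "\<beta> = 1 - (1-p) * r"
  have b01: "0 \<le> \<beta>" "\<beta> \<le> 1" using p r01 by (auto simp: \<beta>_def mult_le_one)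
  have sv: "sample_view G n p B u = bernoulli_pmf \<beta>"
    using sample_view_eq[OF p ne, of B] by (simp add: \<beta>_def r_def rf_def)
  have "node_update k p G n B u = map_pmf (\<lambda>j. j \<le> m) (map_pmf (\<lambda>obs. length (filter Not obs)) (rep_pmf k (bernoulli_pmf \<beta>)))"
    unfolding node_update_def sv map_pmf_comp
  proof (rule map_pmf_cong[OF refl])
    fix obs assume "obs \<in> set_pmf (rep_pmf k (bernoulli_pmf \<beta>))"
    then have len: "length obs = k" by (rule rep_len)
    have "length (filter id obs) + length (filter Not obs) = length obs"
      using sum_length_filter_compl[of id obs] by (simp add: comp_def id_def)
    then show "(length (filter (\<lambda>b. \<not> b) obs) < length (filter id obs)) = (length (filter Not obs) \<le> m)"
      using len k by auto
  qed
  also have "\<dots> = map_pmf (\<lambda>j. j \<le> m) (binomial_pmf k ((1-p) * r))"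
    using rep_count[OF b01, of k] by (simp add: \<beta>_def)
  finally have "measure_pmf.prob (node_update k p G n B u) {False} =
     measure_pmf.prob (binomial_pmf k ((1-p) * r)) {j. \<not> j \<le> m}"
    by (simp add: vimage_def)
  also have "{j. \<not> j \<le> m} = {j. (real k + 1) / 2 \<le> real j}" using k by auto
  finally show ?thesis by (simp add: F_def r_def)
qed


definition Good :: "(nat \<Rightarrow> nat \<Rightarrow> bool) \<Rightarrow> nat \<Rightarrow> real \<Rightarrow> nat set \<Rightarrow> bool" where
  "Good G n a B \<longleftrightarrow> B \<subseteq> {1..n} \<and> (\<forall>w\<in>{1..n}. real (card (nbrs G n w - B)) \<le> a * real (deg G n w))"

lemma Good_mono: "Good G n a B \<Longrightarrow> a \<le> a' \<Longrightarrow> Good G n a' B"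
  unfolding Good_def by (meson order_trans mult_right_mono of_nat_0_le_iff)

lemma one_neighbour_bound:
  assumes k: "k = Suc (2*m)" and p: "0 \<le> p" "p \<le> 1"
    and w: "w \<in> {1..n}" and dw: "real (deg G n w) \<ge> d" and d: "d > 0"
    and degs: "\<forall>u\<in>{1..n}. deg G n u > 0"
    and ra: "\<forall>u\<in>{1..n}. rf G n B u \<le> a"
    and Fa: "\<forall>u\<in>{1..n}. F p k (rf G n B u) \<le> F p k a"
    and eps: "\<epsilon> > 0"
  shows "measure_pmf.prob (Pi_pmf {1..n} False (node_update k p G n B))
           {f. real (card (nbrs G n w - {u\<in>{1..n}. f u})) > (F p k a + \<epsilon>) * real (deg G n w)}
         \<le> exp (-2 * \<epsilon>^2 * d)"
proof -
  define PP where "PP = Pi_pmf {1..n} False (node_update k p G n B)"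
  define N where "N = nbrs G n w"
  define X where "X = (\<lambda>u (f::nat\<Rightarrow>bool). of_bool (\<not> f u) :: real)"
  have finN: "finite N" and Nsub: "N \<subseteq> {1..n}" by (auto simp: N_def nbrs_def)
  have cardN: "card N = deg G n w" by (simp add: N_def deg_def)
  have Npos: "card N > 0" using degs w cardN by auto
  have cardsum: "real (card (nbrs G n w - {u\<in>{1..n}. f u})) = (\<Sum>u\<in>N. X u f)" for f
  proof -
    have "nbrs G n w - {u\<in>{1..n}. f u} = N \<inter> {u. \<not> f u}" using Nsub by (auto simp: N_def)
    then show ?thesis using finN by (simp add: X_def)
  qed
  have EX: "measure_pmf.expectation PP (X u) = F p k (rf G n B u)" if u: "u \<in> {1..n}" for u
  proof -
    have "measure_pmf.expectation PP (X u) = measure_pmf.expectation (map_pmf (\<lambda>f. f u) PP) (\<lambda>b. of_bool (\<not> b))"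
      by (simp add: X_def)
    also have "map_pmf (\<lambda>f. f u) PP = node_update k p G n B u"
      using u by (simp add: PP_def Pi_pmf_component)
    also have "(\<lambda>b. of_bool (\<not> b) :: real) = indicator {False}"
      by (auto simp: indicator_def)
    also have "measure_pmf.expectation (node_update k p G n B u) (indicator {False}) =
               measure_pmf.prob (node_update k p G n B u) {False}"
      by simp
    also have "\<dots> = F p k (rf G n B u)"
    proof -
      have "card (nbrs G n u) > 0" using degs u unfolding deg_def by blast
      then have "nbrs G n u \<noteq> {}" by auto
      then show ?thesis using node_red[OF k p] by blast
    qed
    finally show ?thesis .
  qed
  define \<mu> where "\<mu> = (\<Sum>u\<in>N. measure_pmf.expectation PP (X u))"
  have \<mu>le: "\<mu> \<le> real (deg G n w) * F p k a"
  proof -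
    have "\<mu> = (\<Sum>u\<in>N. F p k (rf G n B u))" unfolding \<mu>_def using Nsub EX by (intro sum.cong) auto
    also have "\<dots> \<le> (\<Sum>u\<in>N. F p k a)" using Nsub Fa by (intro sum_mono) auto
    also have "\<dots> = real (deg G n w) * F p k a" using cardN by simp
    finally show ?thesis .
  qed
  interpret H: Hoeffding_ineq "measure_pmf PP" N X "\<lambda>_. 0" "\<lambda>_. 1" \<mu>
  proof unfold_locales
    show "finite N" by (rule finN)
  next
    have "prob_space.indep_vars (measure_pmf PP) (\<lambda>_. count_space UNIV) (\<lambda>x f. f x) {1..n}"
      unfolding PP_def by (rule indep_vars_Pi_pmf) simp
    then have "prob_space.indep_vars (measure_pmf PP) (\<lambda>_. count_space UNIV) (\<lambda>x f. f x) N"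
      using Nsub by (rule prob_space.indep_vars_subset[OF measure_pmf.prob_space_axioms])
    from prob_space.indep_vars_compose2[OF measure_pmf.prob_space_axioms this, of "\<lambda>_ b. of_bool (\<not> b) :: real" "\<lambda>_. borel"]
    show "prob_space.indep_vars (measure_pmf PP) (\<lambda>_. borel) X N"
      by (simp add: X_def)
  next
    fix i assume "i \<in> N"
    show "AE x in measure_pmf PP. X i x \<in> {0..1}" by (simp add: X_def)
  qed (simp add: \<mu>_def)
  have sq: "(\<Sum>i\<in>N. ((1::real) - 0)\<^sup>2) = real (deg G n w)" using cardN by simp
  have "measure_pmf.prob PP {f. real (card (nbrs G n w - {u\<in>{1..n}. f u})) > (F p k a + \<epsilon>) * real (deg G n w)}
      \<le> measure_pmf.prob PP {x\<in>space (measure_pmf PP). (\<Sum>i\<in>N. X i x) \<ge> \<mu> + \<epsilon> * real (deg G n w)}"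
  proof (rule measure_pmf.finite_measure_mono)
    show "{f. real (card (nbrs G n w - {u\<in>{1..n}. f u})) > (F p k a + \<epsilon>) * real (deg G n w)}
      \<subseteq> {x\<in>space (measure_pmf PP). (\<Sum>i\<in>N. X i x) \<ge> \<mu> + \<epsilon> * real (deg G n w)}"
    proof safe
      fix f assume "real (card (nbrs G n w - {u\<in>{1..n}. f u})) > (F p k a + \<epsilon>) * real (deg G n w)"
      then show "\<mu> + \<epsilon> * real (deg G n w) \<le> (\<Sum>i\<in>N. X i f)"
        using \<mu>le cardsum[of f] by (simp add: algebra_simps)
    qed simp
  qed simp
  also have "\<dots> \<le> exp (-2 * (\<epsilon> * real (deg G n w))\<^sup>2 / (\<Sum>i\<in>N. (1 - 0)\<^sup>2))"
    using H.Hoeffding_ineq_ge[of "\<epsilon> * real (deg G n w)"] eps Npos sq by simp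
  also have "\<dots> = exp (-2 * \<epsilon>^2 * real (deg G n w))"
    using sq Npos cardN by (simp add: power2_eq_square field_simps)
  also have "\<dots> \<le> exp (-2 * \<epsilon>^2 * d)"
    using dw eps by simp
  finally show ?thesis by (simp add: PP_def)
qed


lemma round_bound:
  assumes k: "k = Suc (2*m)" and p: "0 \<le> p" "p \<le> 1"
    and d: "d > 0" and degs: "\<forall>w\<in>{1..n}. real (deg G n w) \<ge> d"
    and good: "Good G n a B"
    and Fmono: "\<forall>x. 0 \<le> x \<longrightarrow> x \<le> a \<longrightarrow> F p k x \<le> F p k a"
    and eps: "\<epsilon> > 0"
  shows "measure_pmf.prob (round_step k p G n B) {B'. \<not> Good G n (F p k a + \<epsilon>) B'}
         \<le> real n * exp (-2 * \<epsilon>^2 * d)"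
proof -
  define PP where "PP = Pi_pmf {1..n} False (node_update k p G n B)"
  define A where "A w = {f. real (card (nbrs G n w - {u\<in>{1..n}. f u})) > (F p k a + \<epsilon>) * real (deg G n w)}" for w
  have degpos: "\<forall>u\<in>{1..n}. deg G n u > 0" using degs d by force
  have ra: "\<forall>u\<in>{1..n}. rf G n B u \<le> a"
  proof
    fix u assume u: "u \<in> {1..n}"
    then have "real (card (nbrs G n u - B)) \<le> a * real (deg G n u)" using good by (auto simp: Good_def)
    then show "rf G n B u \<le> a" using degpos u by (simp add: rf_def deg_def divide_le_eq)
  qed
  have Fa: "\<forall>u\<in>{1..n}. F p k (rf G n B u) \<le> F p k a"
    using ra Fmono rf_01 by blast
  have "measure_pmf.prob (round_step k p G n B) {B'. \<not> Good G n (F p k a + \<epsilon>) B'}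
      = measure_pmf.prob PP ((\<lambda>f. {u\<in>{1..n}. f u}) -` {B'. \<not> Good G n (F p k a + \<epsilon>) B'})"
    by (simp add: round_step_def PP_def)
  also have "\<dots> \<le> measure_pmf.prob PP (\<Union>w\<in>{1..n}. A w)"
  proof (rule measure_pmf.finite_measure_mono)
    show "(\<lambda>f. {u\<in>{1..n}. f u}) -` {B'. \<not> Good G n (F p k a + \<epsilon>) B'} \<subseteq> (\<Union>w\<in>{1..n}. A w)"
      by (auto simp: Good_def A_def not_le)
  qed simp
  also have "\<dots> \<le> (\<Sum>w\<in>{1..n}. measure_pmf.prob PP (A w))"
    by (rule measure_pmf.finite_measure_subadditive_finite) auto
  also have "\<dots> \<le> (\<Sum>w\<in>{1..n}. exp (-2 * \<epsilon>^2 * d))"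
  proof (rule sum_mono)
    fix w assume w: "w \<in> {1..n}"
    show "measure_pmf.prob PP (A w) \<le> exp (-2 * \<epsilon>^2 * d)"
      unfolding PP_def A_def
      by (rule one_neighbour_bound[OF k p w _ d degpos ra Fa eps]) (use degs w in auto)
  qed
  also have "\<dots> = real n * exp (-2 * \<epsilon>^2 * d)" by simp
  finally show ?thesis .
qed


lemma traj_bound:
  assumes Q0: "Q 0 B0"
    and step: "\<And>t B. t < T \<Longrightarrow> Q t B \<Longrightarrow>
        measure_pmf.prob (round_step k p G n B) {B'. \<not> Q (Suc t) B'} \<le> \<eta>"
    and eta: "\<eta> \<ge> 0"
  shows "t \<le> T \<Longrightarrow> measure_pmf.prob (trajectory k p G n B0 t) {xs. \<not> Q t (last xs)} \<le> real t * \<eta>"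
proof (induction t)
  case 0
  then show ?case using Q0 by simp
next
  case (Suc t)
  define M where "M = trajectory k p G n B0 t"
  define Bad where "Bad = {xs. \<not> Q t (last xs)}"
  have IH: "measure_pmf.prob M Bad \<le> real t * \<eta>" using Suc by (simp add: M_def Bad_def)
  have pw: "emeasure (measure_pmf (map_pmf (\<lambda>B'. xs @ [B']) (round_step k p G n (last xs))))
              {xs. \<not> Q (Suc t) (last xs)} \<le> indicator Bad xs + ennreal \<eta>" for xs
  proof -
    have "emeasure (measure_pmf (map_pmf (\<lambda>B'. xs @ [B']) (round_step k p G n (last xs))))
              {xs. \<not> Q (Suc t) (last xs)} = ennreal (measure_pmf.prob (round_step k p G n (last xs)) {B'. \<not> Q (Suc t) B'})"
      by (simp add: measure_pmf.emeasure_eq_measure vimage_def)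
    also have "\<dots> \<le> indicator Bad xs + ennreal \<eta>"
    proof (cases "Q t (last xs)")
      case True
      then have "measure_pmf.prob (round_step k p G n (last xs)) {B'. \<not> Q (Suc t) B'} \<le> \<eta>"
        using step[of t "last xs"] Suc.prems by simp
      then show ?thesis by (simp add: ennreal_leI add_increasing)
    next
      case False
      then have "indicator Bad xs = (1::ennreal)" by (simp add: Bad_def)
      moreover have "ennreal (measure_pmf.prob (round_step k p G n (last xs)) {B'. \<not> Q (Suc t) B'}) \<le> 1"
        by (simp add: ennreal_leI)
      ultimately show ?thesis by (simp add: add_increasing2)
    qed
    finally show ?thesis .
  qed
  have "ennreal (measure_pmf.prob (trajectory k p G n B0 (Suc t)) {xs. \<not> Q (Suc t) (last xs)})
      = emeasure (measure_pmf (trajectory k p G n B0 (Suc t))) {xs. \<not> Q (Suc t) (last xs)}"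
    by (simp add: measure_pmf.emeasure_eq_measure)
  also have "\<dots> = (\<integral>\<^sup>+xs. emeasure (measure_pmf (map_pmf (\<lambda>B'. xs @ [B']) (round_step k p G n (last xs))))
              {xs. \<not> Q (Suc t) (last xs)} \<partial>measure_pmf M)"
    by (simp add: M_def)
  also have "\<dots> \<le> (\<integral>\<^sup>+xs. indicator Bad xs + ennreal \<eta> \<partial>measure_pmf M)"
    by (rule nn_integral_mono) (rule pw)
  also have "\<dots> = emeasure (measure_pmf M) Bad + ennreal \<eta>"
    by (subst nn_integral_add) (auto simp: measure_pmf.emeasure_space_1)
  also have "\<dots> = ennreal (measure_pmf.prob M Bad + \<eta>)"
    using eta by (simp add: measure_pmf.emeasure_eq_measure ennreal_plus)
  finally have H: "ennreal (measure_pmf.prob (trajectory k p G n B0 (Suc t)) {xs. \<not> Q (Suc t) (last xs)}) \<le> ennreal (measure_pmf.prob M Bad + \<eta>)" .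
  have nn: "0 \<le> measure_pmf.prob M Bad + \<eta>" using eta by simp
  from H have "measure_pmf.prob (trajectory k p G n B0 (Suc t)) {xs. \<not> Q (Suc t) (last xs)} \<le> measure_pmf.prob M Bad + \<eta>"
    by (simp only: ennreal_le_iff[OF nn])
  then show ?case using IH by (simp add: algebra_simps)
qed


lemma traj_ne: "xs \<in> set_pmf (trajectory k p G n B0 t) \<Longrightarrow> xs \<noteq> []"
  by (induction t arbitrary: xs) auto

lemma vol_good:
  assumes sg: "simple_graph n G" and degs: "\<forall>u\<in>{1..n}. deg G n u > 0" and n: "n \<ge> 1"
    and good: "Good G n a B" and a: "a < 1/2"
  shows "vol G n B / vol G n {1..n} > 1/2"
proof -
  define V where "V = {1..n}"
  have BV: "B \<subseteq> V" using good by (simp add: Good_def V_def)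
  have finV: "finite V" by (simp add: V_def)
  have volV: "vol G n V > 0" unfolding vol_def using degs n finV
    by (intro sum_pos) (auto simp: V_def)
  have degsum: "real (deg G n v) = (\<Sum>u\<in>V. of_bool (G v u))" for v
    using finV by (simp add: deg_def nbrs_def V_def Int_def conj_commute)
  have "vol G n V - vol G n B = (\<Sum>v\<in>V - B. real (deg G n v))"
    unfolding vol_def using BV finV by (simp add: sum_diff)
  also have "\<dots> = (\<Sum>v\<in>V - B. \<Sum>u\<in>V. of_bool (G v u))" by (simp add: degsum)
  also have "\<dots> = (\<Sum>u\<in>V. \<Sum>v\<in>V - B. of_bool (G v u))" by (rule sum.swap)
  also have "\<dots> = (\<Sum>u\<in>V. \<Sum>v\<in>V - B. of_bool (G u v))"
    using sg by (intro sum.cong refl) (auto simp: simple_graph_def V_def)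
  also have "\<dots> = (\<Sum>u\<in>V. real (card (nbrs G n u - B)))"
  proof (intro sum.cong refl)
    fix u assume "u \<in> V"
    have "nbrs G n u - B = (V - B) \<inter> {v. G u v}" by (auto simp: nbrs_def V_def)
    then show "(\<Sum>v\<in>V - B. of_bool (G u v)) = real (card (nbrs G n u - B))"
      using finV by simp
  qed
  also have "\<dots> \<le> (\<Sum>u\<in>V. a * real (deg G n u))"
    using good by (intro sum_mono) (auto simp: Good_def V_def)
  also have "\<dots> = a * vol G n V" by (simp add: vol_def sum_distrib_left)
  finally have "vol G n B \<ge> (1 - a) * vol G n V" by (simp add: algebra_simps)
  moreover have "(1 - a) * vol G n V > vol G n V / 2"
  proof -
    have "(1/2 - a) * vol G n V > 0" using a volV by (intro mult_pos_pos) auto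
    then show ?thesis by (simp add: algebra_simps)
  qed
  ultimately have "vol G n B > vol G n V / 2" by linarith
  then show ?thesis using volV by (simp add: V_def field_simps)
qed

lemma fixed_n_bound:
  assumes k: "k = Suc (2*m)" and p: "0 \<le> p" "p \<le> 1"
    and Fmono: "\<And>x a. 0 \<le> x \<Longrightarrow> x \<le> a \<Longrightarrow> a \<le> 1 \<Longrightarrow> F p k x \<le> F p k a"
    and N: "N \<ge> 1" and dec: "\<And>x. 1/2 \<le> x \<Longrightarrow> x \<le> 1 \<Longrightarrow> F p k x \<le> x - 1 / real N"
    and sg: "simple_graph n G" and n: "n \<ge> 1" and d: "d > 0"
    and degs: "\<forall>w\<in>{1..n}. d \<le> real (deg G n w)"
  shows "prob_tau_le k p G n (Suc N) \<ge> 1 - real (Suc N) * (real n * exp (-2 * (1 / (2 * real N))^2 * d))"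
proof -
  define \<epsilon> where "\<epsilon> = 1 / (2 * real N)"
  define a where "a t = 1 - real t / (2 * real N)" for t
  define \<eta> where "\<eta> = real n * exp (-2 * \<epsilon>^2 * d)"
  define Q where "Q t B = Good G n (a t) B" for t B
  have eps: "\<epsilon> > 0" using N by (simp add: \<epsilon>_def)
  have eta: "\<eta> \<ge> 0" by (simp add: \<eta>_def)
  have Q0: "Q 0 {}" by (simp add: Q_def a_def Good_def deg_def)
  have step: "measure_pmf.prob (round_step k p G n B) {B'. \<not> Q (Suc t) B'} \<le> \<eta>"
    if t: "t < Suc N" and QB: "Q t B" for t B
  proof -
    have at: "1/2 \<le> a t" "a t \<le> 1" using t N by (auto simp: a_def field_simps)
    have "measure_pmf.prob (round_step k p G n B) {B'. \<not> Q (Suc t) B'}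
        \<le> measure_pmf.prob (round_step k p G n B) {B'. \<not> Good G n (F p k (a t) + \<epsilon>) B'}"
    proof (rule measure_pmf.finite_measure_mono)
      have "F p k (a t) + \<epsilon> \<le> a (Suc t)"
        using dec[OF at] N by (simp add: a_def \<epsilon>_def field_simps)
      then show "{B'. \<not> Q (Suc t) B'} \<subseteq> {B'. \<not> Good G n (F p k (a t) + \<epsilon>) B'}"
        by (auto simp: Q_def intro: Good_mono)
    qed simp
    also have "\<dots> \<le> \<eta>"
      unfolding \<eta>_def
    proof (rule round_bound[OF k p d degs])
      show "Good G n (a t) B" using QB by (simp add: Q_def)
      show "\<forall>x. 0 \<le> x \<longrightarrow> x \<le> a t \<longrightarrow> F p k x \<le> F p k (a t)" using Fmono at by auto
    qed (rule eps)
    finally show ?thesis .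
  qed
  have tb: "measure_pmf.prob (trajectory k p G n {} (Suc N)) {xs. \<not> Q (Suc N) (last xs)} \<le> real (Suc N) * \<eta>"
    by (rule traj_bound[of Q "{}" "Suc N" k p G n \<eta>, OF Q0 step eta]) auto
  have aT: "a (Suc N) < 1/2" using N by (simp add: a_def field_simps)
  have degpos: "\<forall>u\<in>{1..n}. deg G n u > 0" using degs d by force
  define Ev where "Ev = {xs. \<exists>B\<in>set xs. vol G n B / vol G n {1..n} > 1/2}"
  have "measure_pmf.prob (trajectory k p G n {} (Suc N)) {xs. Q (Suc N) (last xs)}
      = measure_pmf.prob (trajectory k p G n {} (Suc N)) ({xs. Q (Suc N) (last xs)} \<inter> set_pmf (trajectory k p G n {} (Suc N)))"
    by (rule measure_Int_set_pmf[symmetric])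
  also have "\<dots> \<le> measure_pmf.prob (trajectory k p G n {} (Suc N)) Ev"
  proof (rule measure_pmf.finite_measure_mono)
    show "{xs. Q (Suc N) (last xs)} \<inter> set_pmf (trajectory k p G n {} (Suc N)) \<subseteq> Ev"
    proof safe
      fix xs assume Qx: "Q (Suc N) (last xs)" and xs: "xs \<in> set_pmf (trajectory k p G n {} (Suc N))"
      have "xs \<noteq> []" using traj_ne[OF xs] .
      then have "last xs \<in> set xs" by simp
      moreover have "vol G n (last xs) / vol G n {1..n} > 1/2"
        using vol_good[OF sg degpos n _ aT] Qx by (simp add: Q_def)
      ultimately show "xs \<in> Ev" unfolding Ev_def by blast
    qed
  qed simp
  finally have "measure_pmf.prob (trajectory k p G n {} (Suc N)) Ev \<ge>
      measure_pmf.prob (trajectory k p G n {} (Suc N)) {xs. Q (Suc N) (last xs)}" .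
  moreover have "measure_pmf.prob (trajectory k p G n {} (Suc N)) {xs. Q (Suc N) (last xs)}
      = 1 - measure_pmf.prob (trajectory k p G n {} (Suc N)) {xs. \<not> Q (Suc N) (last xs)}"
  proof -
    have e: "{xs. \<not> Q (Suc N) (last xs)} = space (measure_pmf (trajectory k p G n {} (Suc N))) - {xs. Q (Suc N) (last xs)}" by auto
    show ?thesis unfolding e by (subst measure_pmf.prob_compl) auto
  qed
  ultimately show ?thesis using tb unfolding prob_tau_le_def Ev_def \<eta>_def \<epsilon>_def by linarith
qed


theorem corollary5p8:
  fixes k :: nat and p :: real
  assumes "odd k" and "k \<ge> 3" and "pstar k < p" and "p \<le> 1"
  shows "\<exists>T::nat. \<forall>E :: nat \<Rightarrow> nat \<Rightarrow> nat \<Rightarrow> bool.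
           (\<forall>n. simple_graph n (E n)) \<and>
           (\<lambda>n. real (Min (deg (E n) n ` {1..n}))) \<in> \<omega>(\<lambda>n. ln (real n))
           \<longrightarrow> (\<lambda>n. prob_tau_le k p (E n) n T) \<longlonglongrightarrow> 1"
proof -
  obtain m where k: "k = Suc (2*m)" using assms(1) by (metis oddE Suc_eq_plus1)
  have m: "m \<ge> 1" using assms(2) k by simp
  obtain M where M1: "1 < M" and ps: "pstar k = 1 - 1/M"
      and hbM: "\<forall>y. 0 \<le> y \<longrightarrow> y \<le> 1 \<longrightarrow> hb m y \<le> M*y"
    using pstar_char[OF k m] by blast
  define c where "c = 1 - p"
  have c0: "0 \<le> c" using assms(4) by (simp add: c_def)
  have cM: "c * M < 1" using assms(3) ps M1 by (simp add: c_def field_simps)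
  have p0: "0 \<le> p" using assms(3) ps M1 by (smt (verit) divide_less_eq_1_pos)
  have c1: "c \<le> 1" using p0 by (simp add: c_def)
  have Fx: "F p k x = hb m (c*x)" if "0 \<le> x" "x \<le> 1" for x
    using F_hb[OF k, of p x] that c0 c1 by (simp add: c_def mult_le_one)
  have Fmono: "F p k x \<le> F p k a" if "0 \<le> x" "x \<le> a" "a \<le> 1" for x a
    using that Fx[of x] Fx[of a] c0 c1 by (auto intro!: hb_mono mult_left_mono simp: mult_le_one)
  define \<phi> where "\<phi> x = x - hb m (c*x)" for x
  have contr: "\<phi> x > 0" if "0 < x" "x \<le> 1" for x
  proof -
    have "hb m (c*x) \<le> M*(c*x)" using hbM c0 c1 that by (simp add: mult_le_one)
    also have "\<dots> = (c*M)*x" by simp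
    also have "\<dots> < x" using cM that by simp
    finally show ?thesis by (simp add: \<phi>_def)
  qed
  have phicont: "continuous_on {1/2..1} \<phi>"
    unfolding \<phi>_def by (intro continuous_intros continuous_on_compose2[OF hb_cont[of UNIV m]]) auto
  obtain x0 where x0: "x0 \<in> {1/2..1}" and x0min: "\<forall>y\<in>{1/2..1}. \<phi> x0 \<le> \<phi> y"
    using continuous_attains_inf[OF compact_Icc _ phicont] by auto
  define \<delta> where "\<delta> = \<phi> x0"
  have \<delta>: "\<delta> > 0" using contr x0 by (simp add: \<delta>_def)
  obtain N :: nat where N: "1/\<delta> < N" using reals_Archimedean2 by blast
  have N1: "N \<ge> 1" using N \<delta> by (cases N) auto
  have invN: "1 / real N < \<delta>" using N \<delta> N1 by (simp add: field_simps)
  have dec: "F p k x \<le> x - 1 / real N" if "1/2 \<le> x" "x \<le> 1" for x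
  proof -
    have "\<phi> x \<ge> \<delta>" using x0min that by (simp add: \<delta>_def)
    then show ?thesis using Fx[of x] that invN by (simp add: \<phi>_def)
  qed
  define \<epsilon> where "\<epsilon> = 1 / (2 * real N)"
  have eps: "\<epsilon> > 0" using N1 by (simp add: \<epsilon>_def)
  show ?thesis
  proof (intro exI[of _ "Suc N"] allI impI)
    fix E :: "nat \<Rightarrow> nat \<Rightarrow> nat \<Rightarrow> bool"
    assume hyp: "(\<forall>n. simple_graph n (E n)) \<and>
           (\<lambda>n. real (Min (deg (E n) n ` {1..n}))) \<in> \<omega>(\<lambda>n. ln (real n))"
    define D where "D n = real (Min (deg (E n) n ` {1..n}))" for n
    have ev1: "eventually (\<lambda>n. (1/\<epsilon>^2) * norm (ln (real n)) \<le> norm (D n)) sequentially"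
      unfolding D_def by (rule smallomegaD) (use hyp in blast)
    have ev2: "eventually (\<lambda>n. n \<ge> (3::nat)) sequentially" by (rule eventually_ge_at_top)
    have lower: "eventually (\<lambda>n. 1 - real (Suc N) / real n \<le> prob_tau_le k p (E n) n (Suc N)) sequentially"
      using ev1 ev2
    proof eventually_elim
      case (elim n)
      have n3: "real n \<ge> 3" using elim(2) by simp
      have lnpos: "ln (real n) > 0" using n3 by simp
      have Dge: "D n \<ge> ln (real n) / \<epsilon>^2" using elim(1) lnpos eps by (simp add: D_def field_simps)
      have Dpos: "D n > 0" using Dge lnpos eps by (smt (verit) divide_pos_pos zero_less_power)
      have degs: "\<forall>w\<in>{1..n}. D n \<le> real (deg (E n) n w)"
        unfolding D_def by (auto intro!: Min_le)
      have B: "prob_tau_le k p (E n) n (Suc N) \<ge> 1 - real (Suc N) * (real n * exp (-2 * (1 / (2 * real N))^2 * D n))"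
        by (rule fixed_n_bound[OF k p0 assms(4) Fmono N1 dec]) (use hyp elim(2) Dpos degs in auto)
      have "exp (-2 * \<epsilon>^2 * D n) \<le> exp (-2 * ln (real n))"
      proof -
        have "\<epsilon>^2 * D n \<ge> ln (real n)" using Dge eps by (simp add: field_simps)
        then show ?thesis by simp
      qed
      also have "exp (-2 * ln (real n)) = 1 / (real n * real n)"
      proof -
        have "exp (-2 * ln (real n)) = 1 / (exp (ln (real n)) * exp (ln (real n)))"
          by (simp add: exp_minus flip: exp_add) (simp add: field_simps)
        then show ?thesis using n3 by simp
      qed
      finally have "real n * exp (-2 * \<epsilon>^2 * D n) \<le> real n * (1 / (real n * real n))"
        using n3 by (intro mult_left_mono) auto
      also have "\<dots> = 1 / real n" using n3 by simp
      finally have "real (Suc N) * (real n * exp (-2 * \<epsilon>^2 * D n)) \<le> real (Suc N) * (1 / real n)"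
        by (intro mult_left_mono) auto
      then show ?case using B by (simp add: \<epsilon>_def)
    qed
    have upper: "eventually (\<lambda>n. prob_tau_le k p (E n) n (Suc N) \<le> 1) sequentially"
      by (simp add: prob_tau_le_def)
    have lim: "(\<lambda>n. 1 - real (Suc N) / real n) \<longlonglongrightarrow> 1"
      using tendsto_diff[OF tendsto_const lim_const_over_n[of "real (Suc N)"]] by simp
    show "(\<lambda>n. prob_tau_le k p (E n) n (Suc N)) \<longlonglongrightarrow> 1"
      by (rule tendsto_sandwich[OF lower upper lim tendsto_const])
  qed
qed

end
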